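(* Let $\mathcal{M}$ be a countable Scott set coded by $M=\bigoplus_i X_i$ and let $C \subseteq \omega^2$. If $\mathcal{U}^{\mathcal{M}}_C$ is an $\mathcal{M}$-minimal largeness class, then $\mathcal{U}^{\mathcal{M}}_C$ is partition regular.
   Context: A largeness class is a non-empty $\mathcal{A} \subseteq 2^\omega$ closed upward under $\subseteq$ such that for every finite cover $Y_0\cup\dots\cup Y_{k-1}=\omega$ some $Y_j \in \mathcal{A}$. A partition regular class is a largeness class $\mathcal{L}$ such that for every $X\in\mathcal{L}$ and every finite cover $Y_0\cup\dots\cup Y_{k-1}\supseteq X$ some $Y_j \in \mathcal{L}$. A Scott set is a collection of sets closed under Turing reducibility and join such that every infinite binary tree in it has a path in it; it is countable coded by $M$ if it equals $\{X_i : i\in\omega\}$ with $M = \bigoplus_i X_i$. Fix an effective enumeration $\mathcal{U}^Z_0,\mathcal{U}^Z_1,\dots$ (uniform in the oracle $Z$) of all $\Sigma^0_1(Z)$ classes which are upward-closed under $\subseteq$; for $C\subseteq\omega^2$, $\mathcal{U}^{\mathcal{M}}_C = \bigcap_{\langle e,i\rangle\in C}\mathcal{U}^{X_i}_e$. A class $\mathcal{A}$ is $\mathcal{M}$-minimal if for every $X\in\mathcal{M}$ and $e\in\omega$, either $\mathcal{A}\subseteq\mathcal{U}^X_e$ or $\mathcal{A}\cap\mathcal{U}^X_e$ is not a largeness class. *)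

theory Defs
  imports Main "HOL-Library.Nat_Bijection"
begin

datatype recf =
    Zero
  | Succ
  | Proj nat
  | Oracle
  | Comp recf "recf list"
  | Prim recf recf
  | Mn recf

inductive ev :: "nat set \<Rightarrow> recf \<Rightarrow> nat list \<Rightarrow> nat \<Rightarrow> bool" for A :: "nat set" where
  ev_zero: "ev A Zero xs 0"
| ev_succ: "ev A Succ (x # xs) (Suc x)"
| ev_proj: "i < length xs \<Longrightarrow> ev A (Proj i) xs (xs ! i)"
| ev_oracle: "ev A Oracle (x # xs) (if x \<in> A then 1 else 0)"
| ev_comp: "list_all2 (\<lambda>g y. ev A g xs y) gs ys \<Longrightarrow> ev A f ys z \<Longrightarrow> ev A (Comp f gs) xs z"
| ev_prim0: "ev A f xs z \<Longrightarrow> ev A (Prim f g) (0 # xs) z"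
| ev_primS: "ev A (Prim f g) (n # xs) y \<Longrightarrow> ev A g (y # n # xs) z \<Longrightarrow> ev A (Prim f g) (Suc n # xs) z"
| ev_mn: "ev A f (n # xs) 0 \<Longrightarrow> (\<forall>m<n. \<exists>y>0. ev A f (m # xs) y) \<Longrightarrow> ev A (Mn f) xs n"

definition turing_le :: "nat set \<Rightarrow> nat set \<Rightarrow> bool" where
  "turing_le B A \<longleftrightarrow> (\<exists>f. \<forall>n. ev A f [n] (if n \<in> B then 1 else 0))"

definition join :: "nat set \<Rightarrow> nat set \<Rightarrow> nat set" where
  "join A B = {2 * n | n. n \<in> A} \<union> {2 * n + 1 | n. n \<in> B}"

text \<open>Bijective coding of finite binary strings by natural numbers.\<close>
fun bl_code :: "bool list \<Rightarrow> nat" where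
  "bl_code [] = 0"
| "bl_code (b # bs) = 2 * bl_code bs + (if b then 2 else 1)"

definition binary_tree :: "nat set \<Rightarrow> bool" where
  "binary_tree T \<longleftrightarrow> (\<forall>s t. bl_code (s @ t) \<in> T \<longrightarrow> bl_code s \<in> T)"

definition is_path :: "nat set \<Rightarrow> nat set \<Rightarrow> bool" where
  "is_path T P \<longleftrightarrow> (\<forall>k. bl_code (map (\<lambda>n. n \<in> P) [0..<k]) \<in> T)"

definition scott_set :: "nat set set \<Rightarrow> bool" where
  "scott_set S \<longleftrightarrow>
     (\<forall>A\<in>S. \<forall>B. turing_le B A \<longrightarrow> B \<in> S) \<and>
     (\<forall>A\<in>S. \<forall>B\<in>S. join A B \<in> S) \<and>
     (\<forall>T\<in>S. binary_tree T \<and> infinite T \<longrightarrow> (\<exists>P\<in>S. is_path T P))"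

text \<open>Infinite join \<open>M = \<Oplus>_i X_i\<close> (column \<open>i\<close> of \<open>M\<close> is \<open>X i\<close>).\<close>
definition big_join :: "(nat \<Rightarrow> nat set) \<Rightarrow> nat set" where
  "big_join X = {prod_encode (i, n) | i n. n \<in> X i}"

definition coded_by :: "nat set set \<Rightarrow> (nat \<Rightarrow> nat set) \<Rightarrow> nat set \<Rightarrow> bool" where
  "coded_by S X M \<longleftrightarrow> S = range X \<and> M = big_join X"

definition fin_set :: "nat \<Rightarrow> nat set" where
  "fin_set m = {k. bit m k}"

text \<open>\<open>U Z e\<close>: the upward-closed class generated by the finite sets enumerated by program \<open>e\<close>
  relative to oracle \<open>Z\<close>; as \<open>e\<close> ranges over programs this enumerates, uniformly in \<open>Z\<close>,
  exactly the upward-closed \<Sigma>^0_1(Z) classes.\<close>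
definition U :: "nat set \<Rightarrow> recf \<Rightarrow> nat set set" where
  "U Z e = {Y. \<exists>n m. ev Z e [n] m \<and> fin_set m \<subseteq> Y}"

definition U_C :: "(nat \<Rightarrow> nat set) \<Rightarrow> (recf \<times> nat) set \<Rightarrow> nat set set" where
  "U_C X C = (\<Inter>(e, i)\<in>C. U (X i) e)"

definition largeness :: "nat set set \<Rightarrow> bool" where
  "largeness A \<longleftrightarrow> A \<noteq> {} \<and> (\<forall>Y Z. Y \<in> A \<and> Y \<subseteq> Z \<longrightarrow> Z \<in> A) \<and>
     (\<forall>k (Y :: nat \<Rightarrow> nat set). (\<Union>j<k. Y j) = UNIV \<longrightarrow> (\<exists>j<k. Y j \<in> A))"

definition partition_regular :: "nat set set \<Rightarrow> bool" where
  "partition_regular L \<longleftrightarrow> largeness L \<and>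
     (\<forall>X\<in>L. \<forall>k (Y :: nat \<Rightarrow> nat set). X \<subseteq> (\<Union>j<k. Y j) \<longrightarrow> (\<exists>j<k. Y j \<in> L))"

definition M_minimal :: "nat set set \<Rightarrow> nat set set \<Rightarrow> bool" where
  "M_minimal S A \<longleftrightarrow> (\<forall>Z\<in>S. \<forall>e. A \<subseteq> U Z e \<or> \<not> largeness (A \<inter> U Z e))"

end

theory Submission
  imports Defs
begin

lemma list_all2_det:
  assumes "list_all2 (\<lambda>g y. P g y \<and> (\<forall>y'. P g y' \<longrightarrow> y = y')) gs ys"
    and "list_all2 P gs ys'"
  shows "ys = ys'"
  using assms
proof (induction gs arbitrary: ys ys')
  case Nil then show ?case by simp
next
  case (Cons g gs)
  then show ?case by (cases ys; cases ys'; auto)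
qed

lemma ev_det: "ev A p xs y \<Longrightarrow> ev A p xs y' \<Longrightarrow> y = y'"
proof (induction arbitrary: y' rule: ev.induct)
  case (ev_comp xs gs ys f z)
  from ev_comp.prems obtain ys' where a: "list_all2 (\<lambda>g. ev A g xs) gs ys'" "ev A f ys' y'"
    by (cases rule: ev.cases) auto
  have "ys = ys'" using ev_comp.IH(1) a(1) by (rule list_all2_det)
  then show ?case using ev_comp a by blast
next
  case (ev_mn f n xs)
  from ev_mn.prems have b: "ev A f (y' # xs) 0" "\<forall>m<y'. \<exists>y>0. ev A f (m # xs) y"
    by (cases rule: ev.cases, auto)+
  show ?case
  proof (rule ccontr)
    assume "n \<noteq> y'"
    then consider "n < y'" | "y' < n" by linarith
    then show False
    proof cases
      case 1 then obtain y where "y > 0" "ev A f (n # xs) y" using b by blast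
      then show False using ev_mn.IH(1) by (metis less_irrefl)
    next
      case 2 then obtain y where y: "y > 0" "\<forall>z. ev A f (y' # xs) z \<longrightarrow> y = z"
        using ev_mn.IH(2) by blast
      then have "y = 0" using b(1) by blast
      then show False using y(1) by simp
    qed
  qed
next
  case (ev_zero xs) from ev_zero.prems show ?case by (cases rule: ev.cases) auto
next
  case (ev_succ x xs) from ev_succ.prems show ?case by (cases rule: ev.cases) auto
next
  case (ev_proj i xs) from ev_proj.prems show ?case by (cases rule: ev.cases) auto
next
  case (ev_oracle x xs) from ev_oracle.prems show ?case by (cases rule: ev.cases) auto
next
  case (ev_prim0 f xs z g)
  from ev_prim0.prems have "ev A f xs y'" by (cases rule: ev.cases) auto
  then show ?case using ev_prim0.IH by blast
next
  case (ev_primS f g n xs y z)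
  from ev_primS.prems obtain y1 where "ev A (Prim f g) (n # xs) y1" "ev A g (y1 # n # xs) y'"
    by (cases rule: ev.cases) auto
  then show ?case using ev_primS.IH by metis
qed

lemma ev_Zero_iff[simp]: "ev A Zero xs y \<longleftrightarrow> y = 0"
  by (auto elim: ev.cases intro: ev.intros)
lemma ev_Succ_iff[simp]: "ev A Succ (x # xs) y \<longleftrightarrow> y = Suc x"
  by (auto elim: ev.cases intro: ev.intros)
lemma ev_Proj_iff[simp]: "ev A (Proj i) xs y \<longleftrightarrow> i < length xs \<and> y = xs ! i"
  by (auto elim: ev.cases intro: ev.intros)
lemma ev_Oracle_iff[simp]: "ev A Oracle (x # xs) y \<longleftrightarrow> y = (if x \<in> A then 1 else 0)"
proof
  assume "ev A Oracle (x # xs) y" then show "y = (if x \<in> A then 1 else 0)"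
    by (cases rule: ev.cases) auto
next
  assume "y = (if x \<in> A then 1 else 0)" then show "ev A Oracle (x # xs) y"
    using ev.ev_oracle by simp
qed
lemma ev_Comp_iff[simp]: "ev A (Comp f gs) xs z \<longleftrightarrow> (\<exists>ys. list_all2 (\<lambda>g. ev A g xs) gs ys \<and> ev A f ys z)"
  by (auto elim: ev.cases intro: ev.intros)
lemma ev_Prim0_iff[simp]: "ev A (Prim f g) (0 # xs) z \<longleftrightarrow> ev A f xs z"
  by (auto elim: ev.cases intro: ev.intros)
lemma ev_PrimS_iff[simp]: "ev A (Prim f g) (Suc n # xs) z \<longleftrightarrow> (\<exists>y. ev A (Prim f g) (n # xs) y \<and> ev A g (y # n # xs) z)"
  by (auto elim: ev.cases intro: ev.intros)
lemma ev_Mn_iff[simp]: "ev A (Mn f) xs n \<longleftrightarrow> ev A f (n # xs) 0 \<and> (\<forall>m<n. \<exists>y>0. ev A f (m # xs) y)"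
  by (auto elim: ev.cases intro: ev.intros)

lemma list_all2_Cons1_ex: "list_all2 P (x # xs) ys \<longleftrightarrow> (\<exists>y ys'. ys = y # ys' \<and> P x y \<and> list_all2 P xs ys')"
  by (cases ys) auto



declare list_all2_Cons1_ex[simp]

lemma det_iff: "ev A p xs v \<Longrightarrow> ev A p xs y \<longleftrightarrow> y = v"
  using ev_det by blast

fun constp :: "nat \<Rightarrow> recf" where
  "constp 0 = Zero"
| "constp (Suc c) = Comp Succ [constp c]"

lemma ev_constp[simp]: "ev A (constp c) xs y \<longleftrightarrow> y = c"
  by (induction c arbitrary: y) auto

definition "ADD = Prim (Proj 0) (Comp Succ [Proj 0])"
lemma ev_ADD0: "ev A ADD (a # b # xs) (a + b)"
  unfolding ADD_def by (induction a) auto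
lemma ev_ADD[simp]: "ev A ADD (a # b # xs) y \<longleftrightarrow> y = a + b"
  using det_iff[OF ev_ADD0] .

definition "PRED = Prim Zero (Proj 1)"
lemma ev_PRED0: "ev A PRED (a # xs) (a - 1)"
  unfolding PRED_def by (induction a) auto
lemma ev_PRED[simp]: "ev A PRED (a # xs) y \<longleftrightarrow> y = a - 1"
  using det_iff[OF ev_PRED0] .

definition "SUB = Prim (Proj 0) (Comp PRED [Proj 0])"
lemma ev_SUB0: "ev A SUB (a # b # xs) (b - a)"
  unfolding SUB_def by (induction a) auto
lemma ev_SUB[simp]: "ev A SUB (a # b # xs) y \<longleftrightarrow> y = b - a"
  using det_iff[OF ev_SUB0] .

definition "PAR = Prim Zero (Comp SUB [Proj 0, constp 1])"
lemma ev_PAR0: "ev A PAR (a # xs) (a mod 2)"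
  unfolding PAR_def by (induction a) (auto simp: mod_Suc)
lemma ev_PAR[simp]: "ev A PAR (a # xs) y \<longleftrightarrow> y = a mod 2"
  using det_iff[OF ev_PAR0] .

definition "HALF = Prim Zero (Comp ADD [Proj 0, Comp PAR [Proj 1]])"
lemma ev_HALF0: "ev A HALF (a # xs) (a div 2)"
  unfolding HALF_def by (induction a) (auto simp: div_Suc mod_Suc)
lemma ev_HALF[simp]: "ev A HALF (a # xs) y \<longleftrightarrow> y = a div 2"
  using det_iff[OF ev_HALF0] .

definition "SHIFT = Prim (Proj 0) (Comp HALF [Proj 0])"
lemma ev_SHIFT0: "ev A SHIFT (k # x # xs) (x div 2 ^ k)"
  unfolding SHIFT_def
proof (induction k)
  case (Suc k)
  have "x div 2 ^ Suc k = x div 2 ^ k div 2" by (metis div_mult2_eq power_Suc2)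
  then show ?case using Suc by (simp only: ev_PrimS_iff) auto
qed simp
lemma ev_SHIFT[simp]: "ev A SHIFT (k # x # xs) y \<longleftrightarrow> y = x div 2 ^ k"
  using det_iff[OF ev_SHIFT0] .

definition "BIT = Comp PAR [SHIFT]"
lemma ev_BIT[simp]: "ev A BIT (k # x # xs) y \<longleftrightarrow> y = x div 2 ^ k mod 2"
  unfolding BIT_def by auto

definition "MINP = Comp SUB [Comp SUB [Proj 1, Proj 0], Proj 0]"
lemma ev_MINP[simp]: "ev A MINP (a # b # xs) y \<longleftrightarrow> y = min a b"
  unfolding MINP_def by auto

definition "TRI = Prim Zero (Comp ADD [Proj 0, Comp Succ [Proj 1]])"
lemma ev_TRI0: "ev A TRI (k # xs) (triangle k)"
  unfolding TRI_def by (induction k) auto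
lemma ev_TRI[simp]: "ev A TRI (k # xs) y \<longleftrightarrow> y = triangle k"
  using det_iff[OF ev_TRI0] .

definition "SRCH = Mn (Comp SUB [Comp TRI [Comp Succ [Proj 0]], Comp Succ [Proj 1]])"

lemma triangle_mono: "a \<le> b \<Longrightarrow> triangle a \<le> triangle b"
  by (induction b) (auto simp: le_Suc_eq)

definition "dsum n = fst (prod_decode n) + snd (prod_decode n)"

lemma dsum_bounds: "triangle (dsum n) + fst (prod_decode n) = n" "fst (prod_decode n) \<le> dsum n"
proof -
  obtain i j where ij: "prod_decode n = (i, j)" by fastforce
  have "prod_encode (i, j) = n" using ij by (metis prod_decode_inverse)
  then show "triangle (dsum n) + fst (prod_decode n) = n" "fst (prod_decode n) \<le> dsum n"
    using ij by (auto simp: dsum_def prod_encode_def)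
qed

lemma ev_SRCH0: "ev A SRCH (n # xs) (dsum n)"
proof -
  have 1: "Suc n \<le> triangle (Suc (dsum n))" using dsum_bounds[of n] by simp
  have 2: "triangle (Suc m) \<le> n" if "m < dsum n" for m
    using triangle_mono[of "Suc m" "dsum n"] that dsum_bounds[of n] by simp
  have 3: "\<forall>m<dsum n. \<exists>y>0. ev A (Comp SUB [Comp TRI [Comp Succ [Proj 0]], Comp Succ [Proj 1]]) (m # n # xs) y"
  proof (intro allI impI)
    fix m assume "m < dsum n"
    then have "triangle (Suc m) \<le> n" by (rule 2)
    then show "\<exists>y>0. ev A (Comp SUB [Comp TRI [Comp Succ [Proj 0]], Comp Succ [Proj 1]]) (m # n # xs) y"
      by (simp del: triangle_Suc)
  qed
  have 4: "ev A (Comp SUB [Comp TRI [Comp Succ [Proj 0]], Comp Succ [Proj 1]]) (dsum n # n # xs) 0"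
    using 1 by (simp del: triangle_Suc)
  show ?thesis unfolding SRCH_def ev_Mn_iff using 3 4 by blast
qed
lemma ev_SRCH[simp]: "ev A SRCH (n # xs) y \<longleftrightarrow> y = dsum n"
  using det_iff[OF ev_SRCH0] .

definition "PF = Comp SUB [Comp TRI [SRCH], Proj 0]"
definition "PS = Comp SUB [PF, SRCH]"
lemma ev_PF[simp]: "ev A PF (n # xs) y \<longleftrightarrow> y = fst (prod_decode n)"
  unfolding PF_def using dsum_bounds[of n] by auto
lemma ev_PS[simp]: "ev A PS (n # xs) y \<longleftrightarrow> y = snd (prod_decode n)"
  unfolding PS_def using dsum_bounds[of n] by (auto simp: dsum_def)

definition "sndit t w = ((\<lambda>w. snd (prod_decode w)) ^^ t) w"
definition "ITER = Prim (Proj 0) (Comp PS [Proj 0])"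
lemma ev_ITER0: "ev A ITER (t # w # xs) (sndit t w)"
  unfolding ITER_def sndit_def by (induction t) auto
lemma ev_ITER[simp]: "ev A ITER (t # w # xs) y \<longleftrightarrow> y = sndit t w"
  using det_iff[OF ev_ITER0] .

definition "BSUM r body = Prim Zero (Comp ADD [Proj 0, Comp body (map Proj [1..<r+2])])"

lemma list_all2_Projs:
  "list_all2 (\<lambda>g. ev A g (y # L)) (map Proj [1..<length L + 1]) ys \<longleftrightarrow> ys = L"
proof -
  have "list_all2 (\<lambda>g. ev A g (y # L)) (map Proj [1..<length L + 1]) ys \<longleftrightarrow>
      length ys = length L \<and> (\<forall>i<length L. ev A (Proj (Suc i)) (y # L) (ys ! i))"
    unfolding list_all2_conv_all_nth by (auto simp del: upt_Suc)
  also have "\<dots> \<longleftrightarrow> length ys = length L \<and> (\<forall>i<length L. ys ! i = L ! i)"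
    by (simp only: ev_Proj_iff) auto
  also have "\<dots> \<longleftrightarrow> ys = L" by (metis list_eq_iff_nth_eq)
  finally show ?thesis .
qed

lemma ev_BSUM:
  assumes "length xs = r"
  shows "ev A (BSUM r body) (n # xs) v \<longleftrightarrow> (\<exists>h. (\<forall>k<n. ev A body (k # xs) (h k)) \<and> v = (\<Sum>k<n. h k))"
proof (induction n arbitrary: v)
  case 0 then show ?case by (simp add: BSUM_def)
next
  case (Suc n)
  have e: "ev A (Comp body (map Proj [1..<r+2])) (y # n # xs) z \<longleftrightarrow> ev A body (n # xs) z" for y z
  proof -
    have "length (n # xs) + 1 = r + 2" using assms by simp
    then have "map Proj [1..<r+2] = map Proj [1..<length (n # xs) + 1]" by simp
    then show ?thesis using list_all2_Projs[of A y "n # xs"] by (simp only: ev_Comp_iff) auto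
  qed
  have "ev A (BSUM r body) (Suc n # xs) v \<longleftrightarrow>
        (\<exists>y z. ev A (BSUM r body) (n # xs) y \<and> ev A body (n # xs) z \<and> v = y + z)"
  proof -
    have e2: "ev A (Comp ADD [Proj 0, Comp body (map Proj [1..<r+2])]) (y # n # xs) v \<longleftrightarrow> (\<exists>z. ev A body (n#xs) z \<and> v = y + z)" for y
      by (simp only: ev_Comp_iff[of A ADD] list_all2_Cons1_ex list_all2_Nil e ev_Proj_iff ev_ADD) (auto intro: ev_ADD0)
    have "ev A (BSUM r body) (Suc n # xs) v \<longleftrightarrow> (\<exists>y. ev A (BSUM r body) (n # xs) y \<and> ev A (Comp ADD [Proj 0, Comp body (map Proj [1..<r+2])]) (y # n # xs) v)"
      unfolding BSUM_def by (rule ev_PrimS_iff)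
    then show ?thesis unfolding e2 by blast
  qed
  also have "\<dots> \<longleftrightarrow> (\<exists>h. (\<forall>k<Suc n. ev A body (k # xs) (h k)) \<and> v = (\<Sum>k<Suc n. h k))"
  proof
    assume "\<exists>y z. ev A (BSUM r body) (n # xs) y \<and> ev A body (n # xs) z \<and> v = y + z"
    then obtain y z where yz: "ev A (BSUM r body) (n # xs) y" "ev A body (n # xs) z" "v = y + z" by blast
    then obtain h where h0: "\<forall>k<n. ev A body (k # xs) (h k)" "y = (\<Sum>k<n. h k)"
      using Suc.IH by blast
    have h: "\<forall>k<n. ev A body (k # xs) (h k)" "ev A body (n # xs) z" "v = (\<Sum>k<n. h k) + z"
      using h0 yz by auto
    show "\<exists>h. (\<forall>k<Suc n. ev A body (k # xs) (h k)) \<and> v = (\<Sum>k<Suc n. h k)"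
      by (rule exI[of _ "h(n := z)"]) (use h in \<open>auto simp: less_Suc_eq\<close>)
  next
    assume "\<exists>h. (\<forall>k<Suc n. ev A body (k # xs) (h k)) \<and> v = (\<Sum>k<Suc n. h k)"
    then obtain h where h: "\<forall>k<Suc n. ev A body (k # xs) (h k)" "v = (\<Sum>k<Suc n. h k)" by blast
    have "ev A (BSUM r body) (n # xs) (\<Sum>k<n. h k)" using Suc.IH h(1) less_SucI by blast
    moreover have "ev A body (n # xs) (h n)" using h(1) by auto
    ultimately show "\<exists>y z. ev A (BSUM r body) (n # xs) y \<and> ev A body (n # xs) z \<and> v = y + z"
      using h(2) by auto
  qed
  finally show ?case .
qed

lemma ev_BSUM_total:
  assumes "length xs = r" "\<And>k y. k < n \<Longrightarrow> ev A body (k # xs) y \<longleftrightarrow> y = g k"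
  shows "ev A (BSUM r body) (n # xs) v \<longleftrightarrow> v = (\<Sum>k<n. g k)"
  unfolding ev_BSUM[OF assms(1)] using assms(2)
  by (auto intro!: sum.cong)



fun osub :: "recf \<Rightarrow> recf \<Rightarrow> recf" where
  "osub d Oracle = Comp Oracle [d]"
| "osub d (Comp f gs) = Comp (osub d f) (map (osub d) gs)"
| "osub d (Prim f g) = Prim (osub d f) (osub d g)"
| "osub d (Mn f) = Mn (osub d f)"
| "osub d Zero = Zero"
| "osub d Succ = Succ"
| "osub d (Proj i) = Proj i"

lemma osub_eq_Comp: "osub d p = Comp f gs \<longleftrightarrow>
   (p = Oracle \<and> f = Oracle \<and> gs = [d]) \<or> (\<exists>f' gs'. p = Comp f' gs' \<and> f = osub d f' \<and> gs = map (osub d) gs')"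
  by (cases p) auto
lemma osub_eq_Prim: "osub d p = Prim f g \<longleftrightarrow> (\<exists>f' g'. p = Prim f' g' \<and> f = osub d f' \<and> g = osub d g')"
  by (cases p) auto
lemma osub_eq_Mn: "osub d p = Mn f \<longleftrightarrow> (\<exists>f'. p = Mn f' \<and> f = osub d f')"
  by (cases p) auto
lemma osub_eq_Zero: "osub d p = Zero \<longleftrightarrow> p = Zero" by (cases p) auto
lemma osub_eq_Succ: "osub d p = Succ \<longleftrightarrow> p = Succ" by (cases p) auto
lemma osub_eq_Proj: "osub d p = Proj i \<longleftrightarrow> p = Proj i" by (cases p) auto
lemma osub_eq_Oracle: "osub d p \<noteq> Oracle" by (cases p) auto

locale osetup =
  fixes Z B :: "nat set" and d :: recf and h :: "nat \<Rightarrow> nat"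
  assumes d_ev: "\<And>xs y. ev Z d xs y \<longleftrightarrow> xs \<noteq> [] \<and> y = h (hd xs)"
    and h_mem: "\<And>x. h x \<in> Z \<longleftrightarrow> x \<in> B"
begin

lemma osub_fwd: "ev B p xs y \<Longrightarrow> ev Z (osub d p) xs y"
proof (induction rule: ev.induct)
  case (ev_oracle x xs)
  then show ?case using d_ev h_mem by auto
next
  case (ev_comp xs gs ys f z)
  have "list_all2 (\<lambda>g. ev Z g xs) (map (osub d) gs) ys"
    unfolding list_all2_map1 using ev_comp.IH(1) by (rule list_all2_mono) blast
  then show ?case using ev_comp.IH(2) by auto
next
  case (ev_mn f n xs)
  then show ?case by auto
qed (auto intro: ev.intros)

lemma osub_bwd: "ev Z q xs y \<Longrightarrow> q = osub d p \<Longrightarrow> ev B p xs y"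
proof (induction arbitrary: p rule: ev.induct)
  case (ev_zero xs) then have "p = Zero" using osub_eq_Zero by metis
  then show ?case using ev_zero by auto
next
  case (ev_succ x xs) then have "p = Succ" using osub_eq_Succ by metis
  then show ?case using ev_succ by auto
next
  case (ev_proj i xs) then have "p = Proj i" using osub_eq_Proj by metis
  then show ?case using ev_proj by auto
next
  case (ev_oracle x xs) then show ?case using osub_eq_Oracle by metis
next
  case (ev_comp xs gs ys f z)
  from ev_comp.prems consider "p = Oracle" "f = Oracle" "gs = [d]"
    | f' gs' where "p = Comp f' gs'" "f = osub d f'" "gs = map (osub d) gs'"
    using osub_eq_Comp by metis
  then show ?case
  proof cases
    case 1
    then obtain y0 where "ys = [y0]" "ev Z d xs y0" using ev_comp.IH(1) by auto
    then show ?thesis using ev_comp.IH(2) ev_comp.hyps 1 d_ev h_mem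
      by (cases xs) auto
  next
    case 2
    have "list_all2 (\<lambda>g. ev B g xs) gs' ys"
      using ev_comp.IH(1) unfolding 2 list_all2_map1 by (rule list_all2_mono) blast
    then show ?thesis using ev_comp.IH(2)[OF 2(2)] 2(1) by auto
  qed
next
  case (ev_prim0 f xs z g)
  then obtain f' g' where "p = Prim f' g'" "f = osub d f'" "g = osub d g'" using osub_eq_Prim by metis
  then show ?case using ev_prim0 by auto
next
  case (ev_primS f g n xs y z)
  then obtain f' g' where fg: "p = Prim f' g'" "f = osub d f'" "g = osub d g'" using osub_eq_Prim by metis
  then have "ev B (Prim f' g') (n # xs) y" using ev_primS.IH(1) by simp
  moreover have "ev B g' (y # n # xs) z" using ev_primS.IH(2) fg by simp
  ultimately show ?case using fg by auto
next
  case (ev_mn f n xs)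
  then obtain f' where fg: "p = Mn f'" "f = osub d f'" using osub_eq_Mn by metis
  have 1: "ev B f' (n # xs) 0" using ev_mn.IH(1) fg by blast
  have 2: "\<forall>m<n. \<exists>y>0. ev B f' (m # xs) y"
  proof (intro allI impI)
    fix m assume "m < n"
    then obtain y where "y > 0" "\<forall>x. f = osub d x \<longrightarrow> ev B x (m # xs) y" using ev_mn.IH(2) by blast
    then show "\<exists>y>0. ev B f' (m # xs) y" using fg by blast
  qed
  show ?case using 1 2 fg by simp
qed

lemma osub_iff: "ev Z (osub d p) xs y \<longleftrightarrow> ev B p xs y"
  using osub_fwd osub_bwd by blast

end

definition "D0 = Comp ADD [Proj 0, Proj 0]"
definition "D1 = Comp Succ [D0]"

lemma ev_D0: "ev A D0 xs y \<longleftrightarrow> xs \<noteq> [] \<and> y = 2 * hd xs"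
  unfolding D0_def by (cases xs) auto
lemma ev_D1: "ev A D1 xs y \<longleftrightarrow> xs \<noteq> [] \<and> y = 2 * hd xs + 1"
  unfolding D1_def by (cases xs) (auto simp: D0_def)

lemma join_even: "2 * x \<in> join A B \<longleftrightarrow> x \<in> A"
  unfolding join_def by auto presburger
lemma join_odd: "2 * x + 1 \<in> join A B \<longleftrightarrow> x \<in> B"
  unfolding join_def by auto presburger

lemma osub0_iff: "ev (join A B) (osub D0 p) xs y \<longleftrightarrow> ev A p xs y"
proof -
  interpret osetup "join A B" A D0 "\<lambda>x. 2 * x"
    by unfold_locales (auto simp: ev_D0 join_even)
  show ?thesis by (rule osub_iff)
qed
lemma osub1_iff: "ev (join A B) (osub D1 p) xs y \<longleftrightarrow> ev B p xs y"
proof -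
  interpret osetup "join A B" B D1 "\<lambda>x. 2 * x + 1"
    by unfold_locales (auto simp: ev_D1 join_odd[simplified])
  show ?thesis by (rule osub_iff)
qed



lemma ev_Comp1: "ev A (Comp f [g1]) xs v \<longleftrightarrow> (\<exists>a. ev A g1 xs a \<and> ev A f [a] v)" (is "?L \<longleftrightarrow> ?R")
proof
  assume ?L then show ?R unfolding ev_Comp_iff list_all2_Cons1_ex list_all2_Nil by auto
next
  assume ?R then obtain a where "ev A g1 xs a" "ev A f [a] v" by blast
  then show ?L unfolding ev_Comp_iff by (intro exI[of _ "[a]"]) auto
qed
lemma ev_Comp2: "ev A (Comp f [g1, g2]) xs v \<longleftrightarrow> (\<exists>a b. ev A g1 xs a \<and> ev A g2 xs b \<and> ev A f [a, b] v)" (is "?L \<longleftrightarrow> ?R")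
proof
  assume ?L then show ?R unfolding ev_Comp_iff list_all2_Cons1_ex list_all2_Nil by auto
next
  assume ?R then obtain a b where "ev A g1 xs a" "ev A g2 xs b" "ev A f [a, b] v" by blast
  then show ?L unfolding ev_Comp_iff by (intro exI[of _ "[a, b]"]) auto
qed
lemma ev_Comp3: "ev A (Comp f [g1, g2, g3]) xs v \<longleftrightarrow> (\<exists>a b c. ev A g1 xs a \<and> ev A g2 xs b \<and> ev A g3 xs c \<and> ev A f [a, b, c] v)" (is "?L \<longleftrightarrow> ?R")
proof
  assume ?L then show ?R unfolding ev_Comp_iff list_all2_Cons1_ex list_all2_Nil by auto
next
  assume ?R then obtain a b c where "ev A g1 xs a" "ev A g2 xs b" "ev A g3 xs c" "ev A f [a, b, c] v" by blast
  then show ?L unfolding ev_Comp_iff by (intro exI[of _ "[a, b, c]"]) auto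
qed
lemma ev_Comp4: "ev A (Comp f [g1, g2, g3, g4]) xs v \<longleftrightarrow> (\<exists>a b c d. ev A g1 xs a \<and> ev A g2 xs b \<and> ev A g3 xs c \<and> ev A g4 xs d \<and> ev A f [a, b, c, d] v)" (is "?L \<longleftrightarrow> ?R")
proof
  assume ?L then show ?R unfolding ev_Comp_iff list_all2_Cons1_ex list_all2_Nil by auto
next
  assume ?R then obtain a b c d where "ev A g1 xs a" "ev A g2 xs b" "ev A g3 xs c" "ev A g4 xs d" "ev A f [a, b, c, d] v" by blast
  then show ?L unfolding ev_Comp_iff by (intro exI[of _ "[a, b, c, d]"]) auto
qed
declare ev_Comp_iff[simp del] list_all2_Cons1_ex[simp del]
declare ev_Comp1[simp] ev_Comp2[simp] ev_Comp3[simp] ev_Comp4[simp]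

definition "bitv a k = (a::nat) div 2 ^ k mod 2"

lemma bitv_iff: "bitv a k = (if bit a k then 1 else 0)"
  unfolding bitv_def bit_iff_odd by (auto simp: odd_iff_mod_2_eq_one even_iff_mod_2_eq_zero)

lemma bit_lt: "bit (a::nat) k \<Longrightarrow> k < a"
proof -
  assume "bit a k"
  then have "a div 2 ^ k \<noteq> 0" by (metis bit_iff_odd dvd_0_right)
  then have "2 ^ k \<le> a" by (metis div_less not_le)
  moreover have "k < 2 ^ k" by (rule less_exp)
  ultimately show ?thesis by linarith
qed

definition "s1 x t = (\<Sum>k<x. bitv x k - bitv t k)"
definition "s2 y m t = (\<Sum>k<y. bitv y k - (bitv m k - bitv t k))"

lemma s1_zero: "s1 x t = 0 \<longleftrightarrow> fin_set x \<subseteq> fin_set t"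
proof -
  have "s1 x t = 0 \<longleftrightarrow> (\<forall>k<x. bitv x k - bitv t k = 0)" unfolding s1_def by auto
  also have "\<dots> \<longleftrightarrow> (\<forall>k<x. bit x k \<longrightarrow> bit t k)" by (auto simp: bitv_iff)
  also have "\<dots> \<longleftrightarrow> fin_set x \<subseteq> fin_set t" unfolding fin_set_def using bit_lt by blast
  finally show ?thesis .
qed

lemma s2_zero: "s2 y m t = 0 \<longleftrightarrow> fin_set y \<subseteq> fin_set m - fin_set t"
proof -
  have "s2 y m t = 0 \<longleftrightarrow> (\<forall>k<y. bitv y k - (bitv m k - bitv t k) = 0)" unfolding s2_def by auto
  also have "\<dots> \<longleftrightarrow> (\<forall>k<y. bit y k \<longrightarrow> bit m k \<and> \<not> bit t k)" by (auto simp: bitv_iff)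
  also have "\<dots> \<longleftrightarrow> fin_set y \<subseteq> fin_set m - fin_set t" unfolding fin_set_def using bit_lt by blast
  finally show ?thesis .
qed

definition "TERM1 = Comp SUB [Comp BIT [Proj 0, Proj 2], Comp BIT [Proj 0, Proj 1]]"
definition "TERM2 = Comp SUB [Comp SUB [Comp BIT [Proj 0, Proj 3], Comp BIT [Proj 0, Proj 2]], Comp BIT [Proj 0, Proj 1]]"

lemma ev_TERM1: "ev A TERM1 (k # x # t # xs) v \<longleftrightarrow> v = bitv x k - bitv t k"
  unfolding TERM1_def bitv_def by auto
lemma ev_TERM2: "ev A TERM2 (k # y # m # t # xs) v \<longleftrightarrow> v = bitv y k - (bitv m k - bitv t k)"
  unfolding TERM2_def bitv_def by auto

lemma ev_NS1: "ev A (BSUM 2 TERM1) [x, x, t] v \<longleftrightarrow> v = s1 x t"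
  unfolding s1_def by (rule ev_BSUM_total) (auto simp: ev_TERM1)
lemma ev_NS2: "ev A (BSUM 3 TERM2) [y, y, m, t] v \<longleftrightarrow> v = s2 y m t"
  unfolding s2_def by (rule ev_BSUM_total) (auto simp: ev_TERM2)

definition "FAILC = Comp MINP [Comp (BSUM 2 TERM1) [Proj 0, Proj 0, Proj 2], Comp (BSUM 3 TERM2) [Proj 1, Proj 1, Proj 3, Proj 2]]"
lemma ev_FAILC: "ev A FAILC [x, y, t, m] v \<longleftrightarrow> v = min (s1 x t) (s2 y m t)"
  unfolding FAILC_def by (auto simp: ev_NS1 ev_NS2)

definition "pa t w = fst (prod_decode (fst (prod_decode (sndit t w))))"
definition "pb t w = snd (prod_decode (fst (prod_decode (sndit t w))))"

definition "VV = Comp PF [Comp ITER [Proj 0, Proj 2]]"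
definition "FAIL e0 e1 = Comp FAILC [Comp (osub D0 e0) [Comp PF [VV]], Comp (osub D1 e1) [Comp PS [VV]], Proj 0, Proj 1]"

lemma ev_VV[simp]: "ev A VV [t, m, w] v \<longleftrightarrow> v = fst (prod_decode (sndit t w))"
  unfolding VV_def by auto

lemma ev_FAIL: "ev (join A B) (FAIL e0 e1) [t, m, w] v \<longleftrightarrow>
   (\<exists>x y. ev A e0 [pa t w] x \<and> ev B e1 [pb t w] y \<and> v = min (s1 x t) (s2 y m t))"
  unfolding FAIL_def by (auto simp: ev_FAILC osub0_iff osub1_iff pa_def pb_def)

definition "ACCN e0 e1 = Comp (BSUM 2 (FAIL e0 e1)) [Comp Succ [PF], PF, PS]"

lemma ev_ACCN0: "ev (join A B) (ACCN e0 e1) [n] 0 \<longleftrightarrow>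
   (\<forall>t\<le>fst (prod_decode n). \<exists>x y. ev A e0 [pa t (snd (prod_decode n))] x \<and> ev B e1 [pb t (snd (prod_decode n))] y
        \<and> min (s1 x t) (s2 y (fst (prod_decode n)) t) = 0)" (is "?L \<longleftrightarrow> ?R")
proof -
  define m where "m = fst (prod_decode n)"
  define w where "w = snd (prod_decode n)"
  have "?L \<longleftrightarrow> ev (join A B) (BSUM 2 (FAIL e0 e1)) [Suc m, m, w] 0"
    unfolding ACCN_def m_def w_def by auto
  also have "\<dots> \<longleftrightarrow> (\<exists>h. (\<forall>k<Suc m. ev (join A B) (FAIL e0 e1) [k, m, w] (h k)) \<and> 0 = (\<Sum>k<Suc m. h k))"
    using ev_BSUM[of "[m, w]" 2] by simp
  also have "\<dots> \<longleftrightarrow> (\<forall>k<Suc m. ev (join A B) (FAIL e0 e1) [k, m, w] 0)"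
  proof
    assume "\<exists>h. (\<forall>k<Suc m. ev (join A B) (FAIL e0 e1) [k, m, w] (h k)) \<and> 0 = (\<Sum>k<Suc m. h k)"
    then obtain h where h: "\<forall>k<Suc m. ev (join A B) (FAIL e0 e1) [k, m, w] (h k)" "0 = (\<Sum>k<Suc m. h k)" by blast
    then have "\<forall>k<Suc m. h k = 0" by (auto simp: less_Suc_eq)
    then show "\<forall>k<Suc m. ev (join A B) (FAIL e0 e1) [k, m, w] 0" using h(1) by auto
  next
    assume "\<forall>k<Suc m. ev (join A B) (FAIL e0 e1) [k, m, w] 0"
    then show "\<exists>h. (\<forall>k<Suc m. ev (join A B) (FAIL e0 e1) [k, m, w] (h k)) \<and> 0 = (\<Sum>k<Suc m. h k)"
      by (intro exI[of _ "\<lambda>_. 0"]) simp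
  qed
  also have "\<dots> \<longleftrightarrow> ?R" unfolding m_def[symmetric] w_def[symmetric] ev_FAIL
    by (auto simp: less_Suc_eq_le)
  finally show ?thesis .
qed

definition "PROG e0 e1 = Comp ADD [PF, Mn (Comp (ACCN e0 e1) [Proj 1])]"

lemma ev_PROG: "ev (join A B) (PROG e0 e1) [n] out \<longleftrightarrow> out = fst (prod_decode n) \<and> ev (join A B) (ACCN e0 e1) [n] 0"
proof -
  have g: "ev (join A B) (Mn (Comp (ACCN e0 e1) [Proj 1])) [n] g \<longleftrightarrow> g = 0 \<and> ev (join A B) (ACCN e0 e1) [n] 0" for g
  proof
    assume a: "ev (join A B) (Mn (Comp (ACCN e0 e1) [Proj 1])) [n] g"
    then have 1: "ev (join A B) (ACCN e0 e1) [n] 0" by simp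
    have "g = 0"
    proof (rule ccontr)
      assume "g \<noteq> 0"
      then obtain y where "y > 0" "ev (join A B) (ACCN e0 e1) [n] y" using a by auto
      then show False using ev_det[OF 1] by fastforce
    qed
    then show "g = 0 \<and> ev (join A B) (ACCN e0 e1) [n] 0" using 1 by simp
  next
    assume "g = 0 \<and> ev (join A B) (ACCN e0 e1) [n] 0"
    then show "ev (join A B) (Mn (Comp (ACCN e0 e1) [Proj 1])) [n] g" by simp
  qed
  show ?thesis unfolding PROG_def ev_Comp2 g ev_PF
    by auto
qed

definition "Good A B e0 e1 m \<longleftrightarrow> (\<forall>t\<le>m. \<exists>a b x y. ev A e0 [a] x \<and> ev B e1 [b] y \<and>
    (fin_set x \<subseteq> fin_set t \<or> fin_set y \<subseteq> fin_set m - fin_set t))"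

lemma PROG_sound: "ev (join A B) (PROG e0 e1) [n] out \<Longrightarrow> Good A B e0 e1 out"
  unfolding ev_PROG ev_ACCN0 Good_def
proof (elim conjE, intro allI impI)
  fix t assume out: "out = fst (prod_decode n)" and t: "t \<le> out"
    and H: "\<forall>t\<le>fst (prod_decode n). \<exists>x y. ev A e0 [pa t (snd (prod_decode n))] x \<and>
              ev B e1 [pb t (snd (prod_decode n))] y \<and> min (s1 x t) (s2 y (fst (prod_decode n)) t) = 0"
  then obtain x y where "ev A e0 [pa t (snd (prod_decode n))] x" "ev B e1 [pb t (snd (prod_decode n))] y"
     "min (s1 x t) (s2 y out t) = 0" by auto
  moreover have "min (s1 x t) (s2 y out t) = 0 \<Longrightarrow> s1 x t = 0 \<or> s2 y out t = 0" by linarith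
  ultimately show "\<exists>a b x y. ev A e0 [a] x \<and> ev B e1 [b] y \<and> (fin_set x \<subseteq> fin_set t \<or> fin_set y \<subseteq> fin_set out - fin_set t)"
    using s1_zero[of x t] s2_zero[of y out t] by blast
qed

fun enc :: "nat list \<Rightarrow> nat" where
  "enc [] = 0"
| "enc (v # vs) = prod_encode (v, enc vs)"

lemma sndit_Suc: "sndit (Suc t) w = sndit t (snd (prod_decode w))"
  unfolding sndit_def by (simp only: funpow_Suc_right comp_def)

lemma sndit_enc: "t \<le> length vs \<Longrightarrow> sndit t (enc vs) = enc (drop t vs)"
proof (induction t arbitrary: vs)
  case 0 then show ?case by (simp add: sndit_def)
next
  case (Suc t)
  then obtain v vs' where "vs = v # vs'" by (cases vs) auto
  then show ?case using Suc by (simp add: sndit_Suc)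
qed

lemma fst_sndit_enc: "t < length vs \<Longrightarrow> fst (prod_decode (sndit t (enc vs))) = vs ! t"
  by (simp add: sndit_enc Cons_nth_drop_Suc[symmetric])

lemma PROG_complete:
  assumes "Good A B e0 e1 m"
  shows "\<exists>n. ev (join A B) (PROG e0 e1) [n] m"
proof -
  have "\<forall>t. \<exists>ab. t \<le> m \<longrightarrow> (\<exists>x y. ev A e0 [fst ab] x \<and> ev B e1 [snd ab] y \<and>
    (fin_set x \<subseteq> fin_set t \<or> fin_set y \<subseteq> fin_set m - fin_set t))"
    using assms unfolding Good_def by fastforce
  then obtain ab where ab: "\<And>t. t \<le> m \<Longrightarrow> \<exists>x y. ev A e0 [fst (ab t)] x \<and> ev B e1 [snd (ab t)] y \<and>
    (fin_set x \<subseteq> fin_set t \<or> fin_set y \<subseteq> fin_set m - fin_set t)" by metis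
  define vs where "vs = map (\<lambda>t. prod_encode (ab t)) [0..<Suc m]"
  define w where "w = enc vs"
  define n where "n = prod_encode (m, w)"
  have pab: "pa t w = fst (ab t) \<and> pb t w = snd (ab t)" if "t \<le> m" for t
  proof -
    have "t < length vs" using that by (simp add: vs_def)
    then have "fst (prod_decode (sndit t w)) = prod_encode (ab t)"
      unfolding w_def using fst_sndit_enc that by (simp del: upt_Suc add: vs_def)
    then show ?thesis by (simp add: pa_def pb_def)
  qed
  have "ev (join A B) (PROG e0 e1) [n] m"
    unfolding ev_PROG ev_ACCN0 n_def prod_encode_inverse fst_conv snd_conv
  proof (intro conjI refl allI impI)
    fix t assume t: "t \<le> m"
    then obtain x y where xy: "ev A e0 [fst (ab t)] x" "ev B e1 [snd (ab t)] y"
      "fin_set x \<subseteq> fin_set t \<or> fin_set y \<subseteq> fin_set m - fin_set t" using ab by blast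
    then have "s1 x t = 0 \<or> s2 y m t = 0" using s1_zero[of x t] s2_zero[of y m t] by argo
    then have "min (s1 x t) (s2 y m t) = 0" by auto
    then show "\<exists>x y. ev A e0 [pa t w] x \<and> ev B e1 [pb t w] y \<and> min (s1 x t) (s2 y m t) = 0"
      using xy pab[OF t] by auto
  qed
  then show ?thesis by blast
qed



unbundle bit_operations_syntax

lemma nat_and_le: "(m::nat) AND c \<le> m"
proof -
  have "int (m AND c) = int m AND int c" by (simp add: of_nat_and_eq)
  moreover have "int m AND int c \<le> int m" by simp
  ultimately show ?thesis by linarith
qed

lemma fin_code: "finite K \<Longrightarrow> \<exists>c. fin_set c = K"
proof (induction K rule: finite_induct)
  case empty then show ?case by (intro exI[of _ 0]) (simp add: fin_set_def)
next
  case (insert k K)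
  then obtain c where "fin_set c = K" by blast
  then show ?case by (intro exI[of _ "c OR 2 ^ k"]) (auto simp: fin_set_def bit_or_iff bit_exp_iff)
qed

lemma fin_set_and: "fin_set (m AND c) = fin_set m \<inter> fin_set c"
  by (auto simp: fin_set_def bit_and_iff)

lemma fin_set_finite: "fin_set x \<subseteq> {..<x}"
  unfolding fin_set_def using bit_lt by auto

section \<open>Compactness\<close>

locale kcomp =
  fixes P0 P1 :: "nat set set" and Y :: "nat set"
  assumes up0: "\<And>V V'. V \<in> P0 \<Longrightarrow> V \<subseteq> V' \<Longrightarrow> V' \<in> P0"
    and up1: "\<And>V V'. V \<in> P1 \<Longrightarrow> V \<subseteq> V' \<Longrightarrow> V' \<in> P1"
    and fin0: "\<And>V. V \<in> P0 \<Longrightarrow> \<exists>n. V \<inter> {..<n} \<in> P0"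
    and fin1: "\<And>V. V \<in> P1 \<Longrightarrow> \<exists>n. V \<inter> {..<n} \<in> P1"
    and allbad: "\<And>n. \<exists>B. B \<subseteq> Y \<inter> {..<n} \<and> B \<notin> P0 \<and> (Y \<inter> {..<n}) - B \<notin> P1"
begin

definition "bad n B \<longleftrightarrow> B \<subseteq> Y \<inter> {..<n} \<and> B \<notin> P0 \<and> (Y \<inter> {..<n}) - B \<notin> P1"
definition "ext n B \<longleftrightarrow> (\<forall>N\<ge>n. \<exists>B'. bad N B' \<and> B' \<inter> {..<n} = B)"

lemma bad_restrict: "bad N B \<Longrightarrow> n \<le> N \<Longrightarrow> bad n (B \<inter> {..<n})"
  unfolding bad_def
proof (intro conjI)
  assume a: "B \<subseteq> Y \<inter> {..<N} \<and> B \<notin> P0 \<and> Y \<inter> {..<N} - B \<notin> P1" and "n \<le> N"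
  show "B \<inter> {..<n} \<subseteq> Y \<inter> {..<n}" using a by auto
  show "B \<inter> {..<n} \<notin> P0" using a up0[of "B \<inter> {..<n}" B] by auto
  have "Y \<inter> {..<n} - B \<inter> {..<n} \<subseteq> Y \<inter> {..<N} - B" using \<open>n \<le> N\<close> by auto
  then show "Y \<inter> {..<n} - B \<inter> {..<n} \<notin> P1" using a up1 by blast
qed

lemma ext0: "ext 0 {}"
  unfolding ext_def bad_def using allbad by auto

lemma ext_step: "ext n B \<Longrightarrow> ext (Suc n) B \<or> ext (Suc n) (insert n B)"
proof (rule ccontr)
  assume e: "ext n B" and ne: "\<not> (ext (Suc n) B \<or> ext (Suc n) (insert n B))"
  then obtain N1 where N1: "N1 \<ge> Suc n" "\<forall>B'. bad N1 B' \<longrightarrow> B' \<inter> {..<Suc n} \<noteq> B"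
    unfolding ext_def by blast
  obtain N2 where N2: "N2 \<ge> Suc n" "\<forall>B'. bad N2 B' \<longrightarrow> B' \<inter> {..<Suc n} \<noteq> insert n B"
    using ne unfolding ext_def by blast
  define N where "N = max N1 N2"
  have "N \<ge> n" using N1(1) unfolding N_def by simp
  then obtain B' where B': "bad N B'" "B' \<inter> {..<n} = B" using e unfolding ext_def by blast
  have r1: "bad N1 (B' \<inter> {..<N1})" using bad_restrict[OF B'(1)] by (simp add: N_def)
  have r2: "bad N2 (B' \<inter> {..<N2})" using bad_restrict[OF B'(1)] by (simp add: N_def)
  have q1: "(B' \<inter> {..<N1}) \<inter> {..<Suc n} = B' \<inter> {..<Suc n}" using N1(1) by auto
  have q2: "(B' \<inter> {..<N2}) \<inter> {..<Suc n} = B' \<inter> {..<Suc n}" using N2(1) by auto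
  have "B' \<inter> {..<Suc n} = B \<or> B' \<inter> {..<Suc n} = insert n B"
    using B'(2) by (auto simp: less_Suc_eq)
  then show False using N1(2) r1 q1 N2(2) r2 q2 by metis
qed

fun Bs :: "nat \<Rightarrow> nat set" where
  "Bs 0 = {}"
| "Bs (Suc n) = (if ext (Suc n) (Bs n) then Bs n else insert n (Bs n))"

lemma ext_Bs: "ext n (Bs n)"
proof (induction n)
  case 0 then show ?case using ext0 by simp
next
  case (Suc n) then show ?case using ext_step by auto
qed

lemma Bs_sub: "Bs n \<subseteq> {..<n}"
  by (induction n) auto

lemma Bs_mono: "m \<le> n \<Longrightarrow> Bs n \<inter> {..<m} = Bs m"
proof (induction n)
  case 0 then show ?case by simp
next
  case (Suc n)
  show ?case
  proof (cases "m = Suc n")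
    case True then show ?thesis using Bs_sub[of "Suc n"] by auto
  next
    case False
    then have "m \<le> n" using Suc.prems by simp
    then show ?thesis using Suc.IH by auto
  qed
qed

definition "Binf = (\<Union>n. Bs n)"

lemma Binf_restrict: "Binf \<inter> {..<n} = Bs n"
proof
  show "Binf \<inter> {..<n} \<subseteq> Bs n"
  proof
    fix k assume "k \<in> Binf \<inter> {..<n}"
    then obtain j where "k \<in> Bs j" "k < n" unfolding Binf_def by blast
    then show "k \<in> Bs n"
      using Bs_mono[of n j] Bs_mono[of j n] by (cases "n \<le> j") auto
  qed
  show "Bs n \<subseteq> Binf \<inter> {..<n}" using Bs_sub unfolding Binf_def by blast
qed

lemma bad_Bs: "bad n (Bs n)"
proof -
  obtain B' where "bad n B'" "B' \<inter> {..<n} = Bs n" using ext_Bs[of n] unfolding ext_def by blast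
  moreover have "B' \<subseteq> {..<n}" using \<open>bad n B'\<close> unfolding bad_def by auto
  ultimately show ?thesis by (simp add: Int_absorb2)
qed

lemma Binf_sub: "Binf \<subseteq> Y"
proof
  fix k assume "k \<in> Binf"
  then have "k \<in> Binf \<inter> {..<Suc k}" by simp
  then have "k \<in> Bs (Suc k)" unfolding Binf_restrict .
  moreover have "Bs (Suc k) \<subseteq> Y" using bad_Bs[of "Suc k"] unfolding bad_def by blast
  ultimately show "k \<in> Y" by blast
qed

lemma Binf_bad: "Binf \<notin> P0" "Y - Binf \<notin> P1"
proof
  assume "Binf \<in> P0"
  then obtain n where "Binf \<inter> {..<n} \<in> P0" using fin0 by blast
  then have "Bs n \<in> P0" unfolding Binf_restrict .
  then show False using bad_Bs[of n] unfolding bad_def by blast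
next
  show "Y - Binf \<notin> P1"
  proof
    assume "Y - Binf \<in> P1"
    then obtain n where "(Y - Binf) \<inter> {..<n} \<in> P1" using fin1 by blast
    moreover have "(Y - Binf) \<inter> {..<n} = Y \<inter> {..<n} - Binf \<inter> {..<n}" by blast
    then have "(Y - Binf) \<inter> {..<n} = Y \<inter> {..<n} - Bs n" unfolding Binf_restrict .
    ultimately have "Y \<inter> {..<n} - Bs n \<in> P1" by simp
    then show False using bad_Bs[of n] unfolding bad_def by blast
  qed
qed

end

lemma compactness:
  fixes P0 P1 :: "nat set set" and Y :: "nat set"
  assumes up0: "\<And>V V'. V \<in> P0 \<Longrightarrow> V \<subseteq> V' \<Longrightarrow> V' \<in> P0"
    and up1: "\<And>V V'. V \<in> P1 \<Longrightarrow> V \<subseteq> V' \<Longrightarrow> V' \<in> P1"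
    and fin0: "\<And>V. V \<in> P0 \<Longrightarrow> \<exists>n. V \<inter> {..<n} \<in> P0"
    and fin1: "\<And>V. V \<in> P1 \<Longrightarrow> \<exists>n. V \<inter> {..<n} \<in> P1"
    and good: "\<And>A. A \<subseteq> Y \<Longrightarrow> A \<in> P0 \<or> Y - A \<in> P1"
  shows "\<exists>n. \<forall>B \<subseteq> Y \<inter> {..<n}. B \<in> P0 \<or> (Y \<inter> {..<n}) - B \<in> P1"
proof (rule ccontr)
  assume "\<not> ?thesis"
  then have ab: "\<And>n. \<exists>B. B \<subseteq> Y \<inter> {..<n} \<and> B \<notin> P0 \<and> (Y \<inter> {..<n}) - B \<notin> P1"
    unfolding not_ex not_all not_imp de_Morgan_disj by (simp only: ex_simps)
  interpret kcomp P0 P1 Y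
    apply unfold_locales
    using up0 apply assumption+
    using up1 apply assumption+
    using fin0 apply assumption
    using fin1 apply assumption
    using ab apply assumption
    done
  have "Binf \<in> P0 \<or> Y - Binf \<in> P1" using good[OF Binf_sub] .
  then show False using Binf_bad by blast
qed



unbundle bit_operations_syntax

lemma U_mem: "Y \<in> U Z e \<longleftrightarrow> (\<exists>n m. ev Z e [n] m \<and> fin_set m \<subseteq> Y)"
  by (simp add: U_def)

lemma U_up: "Y \<in> U Z e \<Longrightarrow> Y \<subseteq> Y' \<Longrightarrow> Y' \<in> U Z e"
  unfolding U_mem by blast

lemma U_fin: "Y \<in> U Z e \<Longrightarrow> \<exists>n. Y \<inter> {..<n} \<in> U Z e"
proof -
  assume "Y \<in> U Z e"
  then obtain n m where "ev Z e [n] m" "fin_set m \<subseteq> Y" unfolding U_mem by blast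
  moreover have "fin_set m \<subseteq> {..<m}" by (rule fin_set_finite)
  ultimately have "Y \<inter> {..<m} \<in> U Z e" unfolding U_mem by blast
  then show ?thesis by blast
qed

lemma UC_mem: "Y \<in> U_C X C \<longleftrightarrow> (\<forall>(e, i)\<in>C. Y \<in> U (X i) e)"
  by (auto simp: U_C_def)

lemma fin_set_1: "fin_set 1 = {0}"
proof -
  have "bit (1::nat) k \<longleftrightarrow> k = 0" for k by (rule bit_1_iff)
  then show ?thesis unfolding fin_set_def by blast
qed

lemma fin_set_Suc0: "fin_set (Suc 0) = {0}" using fin_set_1 by simp

context
  fixes S :: "nat set set" and X :: "nat \<Rightarrow> nat set" and M :: "nat set"
    and C :: "(recf \<times> nat) set"
  assumes scott: "scott_set S"
    and coded: "coded_by S X M"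
    and large: "largeness (U_C X C)"
    and mini: "M_minimal S (U_C X C)"
begin

lemma XS: "X i \<in> S" using coded unfolding coded_by_def by blast

lemma joinS: "A \<in> S \<Longrightarrow> B \<in> S \<Longrightarrow> join A B \<in> S"
  using scott unfolding scott_set_def by blast

lemma L_up: "Y \<in> U_C X C \<Longrightarrow> Y \<subseteq> Y' \<Longrightarrow> Y' \<in> U_C X C"
  using large unfolding largeness_def by blast

lemma L_cover: "(\<Union>j<k. Y j) = UNIV \<Longrightarrow> \<exists>j<k. Y j \<in> U_C X C" for k :: nat and Y :: "nat \<Rightarrow> nat set"
proof -
  have h: "\<forall>k (Y :: nat \<Rightarrow> nat set). (\<Union>j<k. Y j) = UNIV \<longrightarrow> (\<exists>j<k. Y j \<in> U_C X C)"
    using large unfolding largeness_def by (elim conjE) assumption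
  assume "(\<Union>j<k. Y j) = UNIV"
  then show ?thesis by (rule h[rule_format])
qed

lemma UNIV_L: "UNIV \<in> U_C X C"
  using L_cover[where k=1 and Y="\<lambda>_. UNIV"] by (simp add: lessThan_Suc)

lemma empty_notin: "{} \<notin> U_C X C"
proof
  assume e: "{} \<in> U_C X C"
  then have all: "Y \<in> U_C X C" for Y using L_up by blast
  have Ueq: "Y \<in> U (X 0) (constp 1) \<longleftrightarrow> 0 \<in> Y" for Y
    unfolding U_mem by (simp add: fin_set_Suc0)
  have "U_C X C \<subseteq> U (X 0) (constp 1) \<or> \<not> largeness (U_C X C \<inter> U (X 0) (constp 1))"
    using mini XS unfolding M_minimal_def by blast
  moreover have "\<not> U_C X C \<subseteq> U (X 0) (constp 1)" using e Ueq by blast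
  moreover have "largeness (U_C X C \<inter> U (X 0) (constp 1))"
    unfolding largeness_def
  proof (intro conjI allI impI)
    show "U_C X C \<inter> U (X 0) (constp 1) \<noteq> {}" using all Ueq[of UNIV] by blast
    show "Z \<in> U_C X C \<inter> U (X 0) (constp 1)" if "Y \<in> U_C X C \<inter> U (X 0) (constp 1) \<and> Y \<subseteq> Z" for Y Z
      using that all Ueq by blast
    show "\<exists>j<k. Y j \<in> U_C X C \<inter> U (X 0) (constp 1)" if "(\<Union>j<k. Y j) = UNIV" for k and Y :: "nat \<Rightarrow> nat set"
    proof -
      have "0 \<in> (\<Union>j<k. Y j)" using that by simp
      then obtain j where "j < k" "0 \<in> Y j" by blast
      then show ?thesis using all Ueq by blast
    qed
  qed
  ultimately show False by blast
qed

lemma two: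
  assumes X0: "X0 \<in> U_C X C" and cov: "X0 \<subseteq> A \<union> B"
  shows "A \<in> U_C X C \<or> B \<in> U_C X C"
proof (rule ccontr)
  assume "\<not> ?thesis"
  then have nA: "A \<notin> U_C X C" and nB: "B \<notin> U_C X C" by auto
  obtain e0 i0 where c0: "(e0, i0) \<in> C" "A \<notin> U (X i0) e0" using nA unfolding UC_mem by blast
  obtain e1 i1 where c1: "(e1, i1) \<in> C" "B \<notin> U (X i1) e1" using nB unfolding UC_mem by blast
  define XA where "XA = X i0"
  define XB where "XB = X i1"
  define Z where "Z = join XA XB"
  define W where "W = U Z (PROG e0 e1)"
  have ZS: "Z \<in> S" unfolding Z_def XA_def XB_def using XS joinS by blast
  have LU0: "Y \<in> U XA e0" if "Y \<in> U_C X C" for Y using that c0(1) unfolding UC_mem XA_def by blast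
  have LU1: "Y \<in> U XB e1" if "Y \<in> U_C X C" for Y using that c1(1) unfolding UC_mem XB_def by blast
  obtain a0 x0 where ax0: "ev XA e0 [a0] x0" using LU0[OF UNIV_L] unfolding U_mem by blast
  obtain b0 y0 where by0: "ev XB e1 [b0] y0" using LU1[OF UNIV_L] unfolding U_mem by blast
  have nA': "A \<notin> U XA e0" using c0(2) unfolding XA_def .
  have nB': "B \<notin> U XB e1" using c1(2) unfolding XB_def .

  have notW: "X0 \<notin> W"
  proof
    assume "X0 \<in> W"
    then obtain n m where nm: "ev Z (PROG e0 e1) [n] m" "fin_set m \<subseteq> X0" unfolding W_def U_mem by blast
    have G: "Good XA XB e0 e1 m" using PROG_sound nm(1) unfolding Z_def .
    have "finite (A \<inter> {..<m})" by simp
    from fin_code[OF this] obtain c where c: "fin_set c = A \<inter> {..<m}" by (elim exE)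
    define t where "t = m AND c"
    have tle: "t \<le> m" unfolding t_def by (rule nat_and_le)
    have ft: "fin_set t = fin_set m \<inter> A"
      unfolding t_def fin_set_and c using fin_set_finite[of m] by blast
    obtain a b x y where abxy: "ev XA e0 [a] x" "ev XB e1 [b] y"
      "fin_set x \<subseteq> fin_set t \<or> fin_set y \<subseteq> fin_set m - fin_set t"
      using G tle unfolding Good_def by blast
    show False
    proof (cases "fin_set x \<subseteq> fin_set t")
      case True
      then have "fin_set x \<subseteq> A" using ft by blast
      then have "A \<in> U XA e0" using abxy(1) unfolding U_mem by blast
      then show False using nA' by contradiction
    next
      case False
      then have "fin_set y \<subseteq> fin_set m - fin_set t" using abxy(3) by blast
      then have "fin_set y \<subseteq> B" using ft nm(2) cov by blast
      then have "B \<in> U XB e1" using abxy(2) unfolding U_mem by blast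
      then show False using nB' by contradiction
    qed
  qed

  define L' where "L' = {Y. \<forall>A'. A' \<in> U_C X C \<or> Y - A' \<in> U_C X C}"

  have L'_cover: "\<exists>j<k. Y j \<in> L'" if cv: "(\<Union>j<k. Y j) = UNIV" for k and Y :: "nat \<Rightarrow> nat set"
  proof (rule ccontr)
    assume "\<not> (\<exists>j<k. Y j \<in> L')"
    then have "\<forall>j. \<exists>A'. j < k \<longrightarrow> A' \<notin> U_C X C \<and> Y j - A' \<notin> U_C X C" unfolding L'_def by blast
    then obtain G where G: "\<And>j. j < k \<Longrightarrow> G j \<notin> U_C X C \<and> Y j - G j \<notin> U_C X C" by metis
    define Q where "Q i = (if even i then G (i div 2) else Y (i div 2) - G (i div 2))" for i
    have "(\<Union>i<2 * k. Q i) = UNIV"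
    proof (intro set_eqI iffI)
      fix x :: nat assume "x \<in> UNIV"
      then obtain j where j: "j < k" "x \<in> Y j" using cv by blast
      show "x \<in> (\<Union>i<2 * k. Q i)"
      proof (cases "x \<in> G j")
        case True
        then have "x \<in> Q (2 * j)" unfolding Q_def by simp
        then show ?thesis using j(1) by (intro UN_I[of "2 * j"]) auto
      next
        case False
        then have "x \<in> Q (2 * j + 1)" unfolding Q_def using j(2) by simp
        then show ?thesis using j(1) by (intro UN_I[of "2 * j + 1"]) auto
      qed
    qed simp
    then obtain i where i: "i < 2 * k" "Q i \<in> U_C X C" using L_cover by blast
    then have "i div 2 < k" by simp
    then show False using G[of "i div 2"] i(2) unfolding Q_def by (cases "even i") auto
  qed

  have L'_L: "Y \<in> U_C X C" if "Y \<in> L'" for Y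
  proof -
    have "Y \<in> U_C X C \<or> Y - Y \<in> U_C X C" using that unfolding L'_def by blast
    then show ?thesis using empty_notin by simp
  qed

  have L'_W: "Y \<in> W" if Y: "Y \<in> L'" for Y
  proof -
    have good: "A' \<in> U XA e0 \<or> Y - A' \<in> U XB e1" if "A' \<subseteq> Y" for A'
    proof -
      have "A' \<in> U_C X C \<or> Y - A' \<in> U_C X C" using Y unfolding L'_def by blast
      then show ?thesis using LU0 LU1 by blast
    qed
    have "\<exists>n. \<forall>B' \<subseteq> Y \<inter> {..<n}. B' \<in> U XA e0 \<or> (Y \<inter> {..<n}) - B' \<in> U XB e1"
      apply (rule compactness)
          apply (erule U_up, assumption)
         apply (erule U_up, assumption)
        apply (erule U_fin)
       apply (erule U_fin)
      apply (erule good)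
      done
    then obtain n where n: "\<forall>B' \<subseteq> Y \<inter> {..<n}. B' \<in> U XA e0 \<or> (Y \<inter> {..<n}) - B' \<in> U XB e1"
      by blast
    have "finite (Y \<inter> {..<n})" by simp
    from fin_code[OF this] obtain cF where cF: "fin_set cF = Y \<inter> {..<n}" by (elim exE)
    have "Good XA XB e0 e1 cF"
      unfolding Good_def
    proof (intro allI impI)
      fix t assume "t \<le> cF"
      define F where "F = Y \<inter> {..<n}"
      have sub: "fin_set t \<inter> F \<subseteq> Y \<inter> {..<n}" unfolding F_def by blast
      have "fin_set t \<inter> F \<in> U XA e0 \<or> F - fin_set t \<inter> F \<in> U XB e1"
        using n[rule_format, OF sub] unfolding F_def .
      then show "\<exists>a b x y. ev XA e0 [a] x \<and> ev XB e1 [b] y \<and>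
          (fin_set x \<subseteq> fin_set t \<or> fin_set y \<subseteq> fin_set cF - fin_set t)"
      proof
        assume "fin_set t \<inter> F \<in> U XA e0"
        then obtain a x where ax: "ev XA e0 [a] x" "fin_set x \<subseteq> fin_set t \<inter> F" unfolding U_mem by blast
        then have "fin_set x \<subseteq> fin_set t" by blast
        then show ?thesis using ax(1) by0 by blast
      next
        assume "F - fin_set t \<inter> F \<in> U XB e1"
        then obtain b y where byy: "ev XB e1 [b] y" "fin_set y \<subseteq> F - fin_set t \<inter> F" unfolding U_mem by blast
        then have "fin_set y \<subseteq> fin_set cF - fin_set t" using cF unfolding F_def by blast
        then show ?thesis using byy(1) ax0 by blast
      qed
    qed
    then obtain n' where "ev Z (PROG e0 e1) [n'] cF" using PROG_complete unfolding Z_def by blast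
    moreover have "fin_set cF \<subseteq> Y" using cF by blast
    ultimately show "Y \<in> W" unfolding W_def U_mem by blast
  qed

  have "largeness (U_C X C \<inter> W)"
    unfolding largeness_def
  proof (intro conjI allI impI)
    have "UNIV \<in> L'" using L'_cover[where k=1 and Y="\<lambda>_. UNIV"] by (simp add: lessThan_Suc)
    then show "U_C X C \<inter> W \<noteq> {}" using L'_L L'_W by blast
    show "Z' \<in> U_C X C \<inter> W" if "Y \<in> U_C X C \<inter> W \<and> Y \<subseteq> Z'" for Y Z'
      using that L_up U_up unfolding W_def by blast
    show "\<exists>j<k. Y j \<in> U_C X C \<inter> W" if "(\<Union>j<k. Y j) = UNIV" for k and Y :: "nat \<Rightarrow> nat set"
      using L'_cover[OF that] L'_L L'_W by blast
  qed
  moreover have "\<not> U_C X C \<subseteq> W" using X0 notW by blast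
  moreover have "U_C X C \<subseteq> W \<or> \<not> largeness (U_C X C \<inter> W)"
    using mini ZS unfolding M_minimal_def W_def by blast
  ultimately show False by blast
qed

lemma pr: "partition_regular (U_C X C)"
  unfolding partition_regular_def
proof (intro conjI large ballI allI impI)
  fix X0 k and Y :: "nat \<Rightarrow> nat set"
  assume "X0 \<in> U_C X C" "X0 \<subseteq> (\<Union>j<k. Y j)"
  then show "\<exists>j<k. Y j \<in> U_C X C"
  proof (induction k arbitrary: X0)
    case 0
    then have "X0 = {}" by simp
    then show ?case using 0 empty_notin by simp
  next
    case (Suc k)
    have "X0 \<subseteq> (\<Union>j<k. Y j) \<union> Y k" using Suc.prems(2) by (auto simp: lessThan_Suc)
    then have "(\<Union>j<k. Y j) \<in> U_C X C \<or> Y k \<in> U_C X C" using two Suc.prems(1) by blast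
    then show ?case
    proof
      assume "(\<Union>j<k. Y j) \<in> U_C X C"
      then obtain j where "j < k" "Y j \<in> U_C X C" using Suc.IH by blast
      then show ?case by (intro exI[of _ j]) simp
    next
      assume "Y k \<in> U_C X C"
      then show ?case by (intro exI[of _ k]) simp
    qed
  qed
qed

end

theorem corollary2p13:
  fixes S :: "nat set set" and X :: "nat \<Rightarrow> nat set" and M :: "nat set"
    and C :: "(recf \<times> nat) set"
  assumes "scott_set S"
    and "coded_by S X M"
    and "largeness (U_C X C)"
    and "M_minimal S (U_C X C)"
  shows "partition_regular (U_C X C)"
  using pr[OF assms] .


end
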